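(* Let $q\ge5$ and $\mu\in\mathbb{F}_q\setminus\{0,1\}$. Let $\ell_\mu$ be the line through $R_{\mu,0}=\mathbf{P}(0,\mu,0,1)$ and $R_{\mu,\infty}=\mathbf{P}(1,0,1,0)$, so $\ell_\mu=\{R_{\mu,\gamma}:\gamma\in\mathbb{F}_q\}\cup\{R_{\mu,\infty}\}$ with $R_{\mu,\gamma}=\mathbf{P}(\gamma,\mu,\gamma,1)$. Then: (i) $\ell_\mu$ has no point on $\mathscr{C}$; (ii) $\ell_\mu$ is not a chord of $\mathscr{C}$; (iii) $\ell_\mu$ is contained in neither $\pi_{osc}(\infty)$ nor $\pi_{osc}(0)$; more precisely $R_{\mu,\gamma}\notin\pi_{osc}(\infty)$ for all $\gamma\in\mathbb{F}_q$, $R_{\mu,\infty}\notin\pi_{osc}(0)$, and $R_{\mu,\infty}\in\pi_{osc}(\infty)$; (iv) if $R_{\mu,\infty}\notin\pi_{osc}(t)$ for all $t\in\mathbb{F}_q$, then $\ell_\mu$ is not contained in any osculating plane; (v) for $t\in\mathbb{F}_q$, $R_{\mu,\infty}\in\pi_{osc}(t)$ if and only if $3t^2+1=0$.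
   Context: Points of $\mathrm{PG}(3,q)$ are written $\mathbf{P}(x_0,x_1,x_2,x_3)$ over $\mathbb{F}_q$. For $t$ in $\mathbb{F}_q$ or $\mathbb{F}_{q^2}$ put $P(t)=\mathbf{P}(t^3,t^2,t,1)$ and $P(\infty)=\mathbf{P}(1,0,0,0)$; the twisted cubic is $\mathscr{C}=\{P(t):t\in\mathbb{F}_q\cup\{\infty\}\}$. The osculating plane $\pi_{osc}(t)$ is $x_0-3tx_1+3t^2x_2-t^3x_3=0$ for $t\in\mathbb{F}_q$ and $\pi_{osc}(\infty)$ is $x_3=0$. A chord of $\mathscr{C}$ is a real chord (line joining two distinct points of $\mathscr{C}$), a tangent (line through $P(t)$ and $\mathbf{P}(3t^2,2t,1,0)$ for $t\in\mathbb{F}_q$, or through $P(\infty)$ and $\mathbf{P}(0,1,0,0)$), or an imaginary chord (line of $\mathrm{PG}(3,q)$ joining $P(t_1),P(t_2)$ with $t_1,t_2=t_1^q\in\mathbb{F}_{q^2}\setminus\mathbb{F}_q$). *)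

theory Defs
  imports Main "HOL-Library.Cardinality"
begin

text \<open>Vectors of F^4 are quadruples; a point of PG(3,q) is the set of nonzero
scalar multiples of a nonzero vector (its class). Lines and planes are sets of points.\<close>

type_synonym 'a vec4 = "'a \<times> 'a \<times> 'a \<times> 'a"

definition vsmult :: "'a::field \<Rightarrow> 'a vec4 \<Rightarrow> 'a vec4" where
  "vsmult c v = (case v of (x0,x1,x2,x3) \<Rightarrow> (c*x0, c*x1, c*x2, c*x3))"

definition vadd :: "'a::field vec4 \<Rightarrow> 'a vec4 \<Rightarrow> 'a vec4" where
  "vadd u v = (case u of (x0,x1,x2,x3) \<Rightarrow> case v of (y0,y1,y2,y3) \<Rightarrow>
                 (x0+y0, x1+y1, x2+y2, x3+y3))"

definition vmap :: "('a \<Rightarrow> 'b) \<Rightarrow> 'a vec4 \<Rightarrow> 'b vec4" where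
  "vmap f v = (case v of (x0,x1,x2,x3) \<Rightarrow> (f x0, f x1, f x2, f x3))"

text \<open>The point \<open>P(x0,x1,x2,x3)\<close> of PG(3,q) (meaningful for nonzero vectors).\<close>
definition proj_pt :: "'a::field vec4 \<Rightarrow> 'a vec4 set" where
  "proj_pt v = {vsmult c v | c. c \<noteq> 0}"

definition line_through :: "'a::field vec4 \<Rightarrow> 'a vec4 \<Rightarrow> 'a vec4 set set" where
  "line_through u v = {proj_pt (vadd (vsmult a u) (vsmult b v)) | a b.
                          vadd (vsmult a u) (vsmult b v) \<noteq> (0,0,0,0)}"

definition Pv :: "'a::field \<Rightarrow> 'a vec4" where
  "Pv t = (t^3, t^2, t, 1)"

definition Pt :: "'a::field \<Rightarrow> 'a vec4 set" where
  "Pt t = proj_pt (Pv t)"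

definition Pinf :: "'a::field vec4 set" where
  "Pinf = proj_pt (1,0,0,0)"

definition cubic :: "'a::field vec4 set set" where
  "cubic = range Pt \<union> {Pinf}"

definition osc :: "'a::field \<Rightarrow> 'a vec4 set set" where
  "osc t = {proj_pt (x0,x1,x2,x3) | x0 x1 x2 x3. (x0,x1,x2,x3) \<noteq> (0,0,0,0) \<and>
                x0 - 3*t*x1 + 3*t^2*x2 - t^3*x3 = 0}"

definition osc_inf :: "'a::field vec4 set set" where
  "osc_inf = {proj_pt (x0,x1,x2,x3) | x0 x1 x2 x3. (x0,x1,x2,x3) \<noteq> (0,0,0,0) \<and> x3 = 0}"

definition real_chord :: "'a::field vec4 set set \<Rightarrow> bool" where
  "real_chord L \<longleftrightarrow> (\<exists>u v. u \<noteq> (0,0,0,0) \<and> v \<noteq> (0,0,0,0) \<and>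
      proj_pt u \<in> cubic \<and> proj_pt v \<in> cubic \<and> proj_pt u \<noteq> proj_pt v \<and> L = line_through u v)"

definition tangent :: "'a::field vec4 set set \<Rightarrow> bool" where
  "tangent L \<longleftrightarrow> (\<exists>t. L = line_through (Pv t) (3*t^2, 2*t, 1, 0))
                 \<or> L = line_through (1,0,0,0) (0,1,0,0)"

text \<open>Imaginary chords, relative to a field \<open>'b\<close> together with an embedding
\<open>emb\<close> of \<open>F_q\<close> into it (intended: \<open>'b = F_{q^2}\<close>). The line of PG(3,q)
joining \<open>P(t1)\<close>, \<open>P(t1^q)\<close> is the set of points of PG(3,q) whose representatives,
viewed over \<open>'b\<close>, lie in the \<open>'b\<close>-span of \<open>P(t1)\<close> and \<open>P(t1^q)\<close>.\<close>
definition imag_chord :: "('a::{finite,field} \<Rightarrow> 'b::field) \<Rightarrow> 'a vec4 set set \<Rightarrow> bool" where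
  "imag_chord emb L \<longleftrightarrow> (\<exists>t1::'b. t1 \<notin> range emb \<and>
      L = {proj_pt x | x. x \<noteq> (0,0,0,0) \<and>
             (\<exists>a b. vmap emb x = vadd (vsmult a (Pv t1)) (vsmult b (Pv (t1 ^ CARD('a)))))})"

definition chord :: "('a::{finite,field} \<Rightarrow> 'b::field) \<Rightarrow> 'a vec4 set set \<Rightarrow> bool" where
  "chord emb L \<longleftrightarrow> real_chord L \<or> tangent L \<or> imag_chord emb L"

end

theory Submission
  imports Defs "HOL-Computational_Algebra.Polynomial"
begin

lemma vsmult_simp[simp]: "vsmult c (a,b,d,e) = (c*a,c*b,c*d,c*e)"
  by (simp add: vsmult_def)
lemma vadd_simp[simp]: "vadd (a,b,d,e) (a',b',d',e') = (a+a',b+b',d+d',e+e')"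
  by (simp add: vadd_def)
lemma vmap_simp[simp]: "vmap f (a,b,d,e) = (f a, f b, f d, f e)"
  by (simp add: vmap_def)

lemma proj_self: "v \<in> proj_pt v"
  unfolding proj_pt_def by (cases v) (auto intro: exI[of _ 1])

lemma proj_eq: "proj_pt u = proj_pt v \<Longrightarrow> \<exists>c. c \<noteq> 0 \<and> v = vsmult c u"
  using proj_self[of v] unfolding proj_pt_def by auto

lemma vsmult_assoc: "vsmult d (vsmult c v) = vsmult (d*c) (v::'a::field vec4)"
  by (cases v) (simp add: mult.assoc)

lemma proj_scale: "(c::'a::field) \<noteq> 0 \<Longrightarrow> proj_pt (vsmult c v) = proj_pt v"
proof -
  assume c: "c \<noteq> 0"
  have 1: "vsmult (d/c) (vsmult c v) = vsmult d v" for d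
    using c by (simp add: vsmult_assoc)
  show ?thesis unfolding proj_pt_def
  proof (intro equalityI subsetI)
    fix y assume "y \<in> {vsmult d (vsmult c v) |d. d \<noteq> 0}"
    then obtain d where "d \<noteq> 0" "y = vsmult d (vsmult c v)" by auto
    then show "y \<in> {vsmult d v |d. d \<noteq> 0}" using c by (auto simp: vsmult_assoc)
  next
    fix y assume "y \<in> {vsmult d v |d. d \<noteq> 0}"
    then obtain d where "d \<noteq> 0" "y = vsmult d v" by auto
    then show "y \<in> {vsmult d (vsmult c v) |d. d \<noteq> 0}" using c 1[of d]
      by (intro CollectI exI[of _ "d/c"]) auto
  qed
qed

lemma fermat_fin:
  fixes x :: "'a::{finite,field}"
  shows "x ^ CARD('a) = x"
proof (cases "x = 0")
  case True
  then show ?thesis by simp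
next
  case False
  define S where "S = (UNIV::'a set) - {0}"
  have bij: "bij_betw (\<lambda>y. x*y) S S"
    unfolding S_def bij_betw_def inj_on_def using False
  proof (intro conjI)
    show "(*) x ` (UNIV - {0}) = UNIV - {0}"
    proof (intro equalityI subsetI)
      fix y assume "y \<in> UNIV - {0::'a}"
      then have "y = x * (y/x)" "y/x \<in> UNIV - {0}" using False by auto
      then show "y \<in> (*) x ` (UNIV - {0})" by blast
    qed (use False in auto)
  qed (use False in auto)
  have "prod (\<lambda>y. x*y) S = prod id S"
    using prod.reindex_bij_betw[OF bij, of id] by simp
  moreover have "prod (\<lambda>y. x*y) S = x ^ card S * prod id S"
    by (simp add: prod.distrib)
  moreover have "prod id S \<noteq> 0" unfolding S_def by simp
  ultimately have "x ^ card S = 1" by simp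
  moreover have "card S = CARD('a) - 1" unfolding S_def by (simp add: card_Diff_subset)
  moreover have "CARD('a) \<ge> 1" by (simp add: Suc_leI)
  ultimately have "CARD('a) = Suc (card S)" by linarith
  then show ?thesis using \<open>x ^ card S = 1\<close> by simp
qed

lemma conj_neq:
  fixes emb :: "'a::{finite,field} \<Rightarrow> 'b::field"
  assumes "emb 0 = 0" "emb 1 = 1" "\<And>x y. emb (x + y) = emb x + emb y"
          "\<And>x y. emb (x * y) = emb x * emb y"
    and t: "t \<notin> range emb"
  shows "t ^ CARD('a) \<noteq> t"
proof
  assume tq: "t ^ CARD('a) = t"
  let ?q = "CARD('a)"
  have "card {0, 1::'a} \<le> ?q" by (rule card_mono) auto
  then have q2: "?q \<ge> 2" by simp
  have embpow: "emb (a ^ n) = emb a ^ n" for a n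
    by (induction n) (auto simp: assms(2,4))
  have inj: "inj emb"
  proof (rule injI)
    fix x y assume "emb x = emb y"
    then have "emb (x - y) = 0" using assms(3)[of "x-y" y] by simp
    show "x = y"
    proof (rule ccontr)
      assume "x \<noteq> y"
      then have "emb ((x-y) * inverse (x-y)) = 1" using assms(2) by simp
      then show False using \<open>emb (x - y) = 0\<close> assms(4) by simp
    qed
  qed
  define p :: "'b poly" where "p = monom 1 ?q - [:0,1:]"
  have pe: "poly p x = x ^ ?q - x" for x by (simp add: p_def poly_monom)
  have qs: "?q = Suc (Suc (?q - 2))" using q2 by arith
  have "coeff [:0,1::'b:] ?q = 0" by (subst qs) (simp only: coeff_pCons_Suc coeff_0)
  then have "coeff p ?q = 1" by (simp add: p_def coeff_monom)
  then have pnz: "p \<noteq> 0" by auto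
  have dp: "degree p \<le> ?q" unfolding p_def
    by (rule degree_diff_le) (auto simp: degree_monom_eq degree_pCons_eq_if q2)
  have "insert t (range emb) \<subseteq> {x. poly p x = 0}"
    using tq by (auto simp: pe embpow[symmetric] fermat_fin)
  then have "card (insert t (range emb)) \<le> card {x. poly p x = 0}"
    by (intro card_mono) (auto intro: poly_roots_finite[OF pnz])
  also have "\<dots> \<le> ?q" using card_poly_roots_bound[OF pnz] dp by linarith
  finally show False using t inj by (simp add: card_image)
qed

lemma cubic_cases: "X \<in> cubic \<Longrightarrow> (\<exists>t. X = proj_pt (Pv t)) \<or> X = proj_pt (1,0,0,0)"
  unfolding cubic_def Pt_def Pinf_def by auto

lemma emb_nz:
  fixes emb :: "'a::field \<Rightarrow> 'b::field"
  assumes "emb 1 = 1" "\<And>x y. emb (x * y) = emb x * emb y" "c \<noteq> 0"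
  shows "emb c \<noteq> 0"
proof
  assume "emb c = 0"
  have "emb (c * inverse c) = 1" using assms by simp
  then show False using \<open>emb c = 0\<close> assms(2) by simp
qed

lemma proj_in_line: "u \<noteq> (0,0,0,0) \<Longrightarrow> proj_pt u \<in> line_through u (v::'a::field vec4)"
proof -
  assume "u \<noteq> (0,0,0,0)"
  moreover have "vadd (vsmult 1 u) (vsmult 0 v) = u" by (cases u; cases v) simp
  ultimately show ?thesis unfolding line_through_def by (metis (mono_tags, lifting) mem_Collect_eq)
qed

lemma imag_alg:
  fixes a b t1 t2 e :: "'b::field"
  assumes "a + b = 0" "a*t1 + b*t2 = e" "a*t1^2 + b*t2^2 = 0" "a*t1^3+b*t2^3 = e"
    "e \<noteq> 0" "t1 \<noteq> t2"
  shows "t1^2 = 1"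
proof -
  have b: "b = -a" using assms(1) by (metis neg_eq_iff_add_eq_0)
  have 1: "a*(t1-t2) = e" using assms(2) b by (simp add: algebra_simps)
  then have an: "a \<noteq> 0" using assms(5) by auto
  have "a*(t1-t2)*(t1+t2) = 0" using assms(3) b by (simp add: algebra_simps power2_eq_square)
  then have "t1 + t2 = 0" using an assms(6) by simp
  then have t2: "t2 = -t1" by (metis neg_eq_iff_add_eq_0)
  have "a*(t1-t2)*t1^2 = e" using assms(4) b t2 by (simp add: algebra_simps power3_eq_cube power2_eq_square)
  then have "e * t1^2 = e * 1" using 1 by simp
  then show ?thesis using assms(5) by (metis mult_left_cancel)
qed

lemma Rinf_inf_g: "proj_pt (1,0,1,0::'c::field) \<in> osc_inf" unfolding osc_inf_def
  by (rule CollectI, rule exI[of _ 1], rule exI[of _ 0], rule exI[of _ 1], rule exI[of _ 0]) simp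
lemma Rinf_osc_g: fixes t :: "'c::field" shows "proj_pt (1,0,1,0) \<in> osc t \<longleftrightarrow> 3 * t^2 + 1 = 0"
proof
  assume "proj_pt (1,0,1,0) \<in> osc t"
  then obtain x0 x1 x2 x3 where e: "proj_pt (1,0,1,0) = proj_pt (x0,x1,x2,x3)"
    "x0 - 3*t*x1 + 3*t^2*x2 - t^3*x3 = 0" unfolding osc_def by auto
  from proj_eq[OF e(1)] obtain c where "c \<noteq> 0" "x0 = c" "x1 = 0" "x2 = c" "x3 = 0" by auto
  with e(2) have "c * (3*t^2+1) = 0" by (simp add: algebra_simps)
  then show "3 * t^2 + 1 = 0" using \<open>c \<noteq> 0\<close> by simp
next
  assume "3 * t^2 + 1 = 0"
  then show "proj_pt (1,0,1,0) \<in> osc t" unfolding osc_def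
    by (intro CollectI exI[of _ 1] exI[of _ 0]) (auto simp: algebra_simps)
qed

theorem lemma4p2:
  fixes \<mu> :: "'a::{finite,field}"
    and emb :: "'a \<Rightarrow> 'b::{finite,field}"
  assumes q5: "CARD('a) \<ge> 5"
    and mu: "\<mu> \<noteq> 0" "\<mu> \<noteq> 1"
    and ext_card: "CARD('b) = CARD('a)^2"
    and emb_hom: "emb 0 = 0" "emb 1 = 1" "\<And>x y. emb (x + y) = emb x + emb y"
                 "\<And>x y. emb (x * y) = emb x * emb y"
  defines "L \<equiv> line_through (0, \<mu>, 0, 1) (1, 0, 1, 0)"
  shows "L = {proj_pt (\<gamma>, \<mu>, \<gamma>, 1) | \<gamma>. True} \<union> {proj_pt (1, 0, 1, 0)}
       \<and> L \<inter> cubic = {}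
       \<and> \<not> chord emb L
       \<and> \<not> L \<subseteq> osc_inf \<and> \<not> L \<subseteq> osc 0
       \<and> (\<forall>\<gamma>. proj_pt (\<gamma>, \<mu>, \<gamma>, 1) \<notin> osc_inf)
       \<and> proj_pt (1, 0, 1, 0) \<notin> osc 0
       \<and> proj_pt (1, 0, 1, 0) \<in> osc_inf
       \<and> ((\<forall>t::'a. proj_pt (1, 0, 1, 0) \<notin> osc t) \<longrightarrow>
             (\<forall>t. \<not> L \<subseteq> osc t) \<and> \<not> L \<subseteq> osc_inf)
       \<and> (\<forall>t::'a. proj_pt (1, 0, 1, 0) \<in> osc t \<longleftrightarrow> 3 * t^2 + 1 = 0)"
proof -
  have Lset: "L = {proj_pt (\<gamma>, \<mu>, \<gamma>, 1) | \<gamma>. True} \<union> {proj_pt (1, 0, 1, 0)}"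
  proof (intro equalityI subsetI)
    fix X assume "X \<in> L"
    then obtain a b where X: "X = proj_pt (b, a*\<mu>, b, a)" "(b, a*\<mu>, b, a) \<noteq> (0,0,0,0)"
      unfolding L_def line_through_def by auto
    show "X \<in> {proj_pt (\<gamma>, \<mu>, \<gamma>, 1) | \<gamma>. True} \<union> {proj_pt (1, 0, 1, 0)}"
    proof (cases "a = 0")
      case True
      then have "b \<noteq> 0" using X by auto
      have "(b, a*\<mu>, b, a) = vsmult b (1,0,1,0)" using True by simp
      then have "X = proj_pt (1,0,1,0)" using proj_scale[OF \<open>b \<noteq> 0\<close>] X by metis
      then show ?thesis by simp
    next
      case False
      have "(b, a*\<mu>, b, a) = vsmult a (b/a,\<mu>,b/a,1)" using False by simp
      then have "X = proj_pt (b/a,\<mu>,b/a,1)" using proj_scale[OF False] X by metis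
      then show ?thesis by blast
    qed
  next
    fix X assume "X \<in> {proj_pt (\<gamma>, \<mu>, \<gamma>, 1) | \<gamma>. True} \<union> {proj_pt (1, 0, 1, 0)}"
    then consider \<gamma> where "X = proj_pt (\<gamma>, \<mu>, \<gamma>, 1)" | "X = proj_pt (1, 0, 1, 0)" by auto
    then show "X \<in> L"
    proof cases
      case (1 \<gamma>)
      then show ?thesis unfolding L_def line_through_def
        by (intro CollectI exI[of _ 1] exI[of _ \<gamma>]) auto
    next
      case 2
      then show ?thesis unfolding L_def line_through_def
        by (intro CollectI exI[of _ 0] exI[of _ 1]) auto
    qed
  qed
  have Rinf_L: "proj_pt (1,0,1,0) \<in> L" using Lset by simp
  have Rg_L: "proj_pt (\<gamma>,\<mu>,\<gamma>,1) \<in> L" for \<gamma> using Lset by blast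
  have Rg_cub: "proj_pt (\<gamma>,\<mu>,\<gamma>,1) \<notin> cubic" for \<gamma>
  proof
    assume "proj_pt (\<gamma>,\<mu>,\<gamma>,1) \<in> cubic"
    then consider t where "proj_pt (\<gamma>,\<mu>,\<gamma>,1) = proj_pt (Pv t)" | "proj_pt (\<gamma>,\<mu>,\<gamma>,1) = proj_pt (1,0,0,0)"
      using cubic_cases[of "proj_pt (\<gamma>,\<mu>,\<gamma>,1)"] by blast
    then show False
    proof cases
      case (1 t)
      from proj_eq[OF 1] obtain c where "c \<noteq> 0" "Pv t = vsmult c (\<gamma>,\<mu>,\<gamma>,1)" by auto
      then have "c = 1" "t = \<gamma>" "t^2 = \<mu>" "t^3 = \<gamma>" by (auto simp: Pv_def)
      then have h: "t * (t*t - 1) = 0" "\<mu> = t*t" by (auto simp: algebra_simps power2_eq_square power3_eq_cube)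
      from h(1) have "t = 0 \<or> t*t - 1 = 0" by (simp only: mult_eq_0_iff)
      then have "\<mu> = 0 \<or> \<mu> = 1" using h(2) by auto
      then show False using mu by blast
    next
      case 2
      from proj_eq[OF 2] show False by auto
    qed
  qed
  have Rinf_cub: "proj_pt (1,0,1,0::'a) \<notin> cubic"
  proof
    assume "proj_pt (1,0,1,0::'a) \<in> cubic"
    then consider t where "proj_pt (1,0,1,0::'a) = proj_pt (Pv t)" | "proj_pt (1,0,1,0::'a) = proj_pt (1,0,0,0)"
      using cubic_cases[of "proj_pt (1,0,1,0::'a)"] by blast
    then show False
    proof cases
      case (1 t)
      from proj_eq[OF 1] show False by (auto simp: Pv_def)
    next
      case 2
      from proj_eq[OF 2] show False by auto
    qed
  qed
  have disj: "L \<inter> cubic = {}" using Lset Rg_cub Rinf_cub by auto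
  have nreal: "\<not> real_chord L"
  proof
    assume "real_chord L"
    then obtain u v where "u \<noteq> (0,0,0,0)" "proj_pt u \<in> cubic" "L = line_through u v"
      unfolding real_chord_def by blast
    then show False using proj_in_line[of u v] disj by auto
  qed
  have ntan: "\<not> tangent L"
  proof
    assume "tangent L"
    then consider t where "L = line_through (Pv t) (3*t^2, 2*t, 1, 0)"
      | "L = line_through (1,0,0,0) (0,1,0,0)" unfolding tangent_def by blast
    then show False
    proof cases
      case (1 t)
      have "Pv t \<noteq> (0,0,0,0)" by (simp add: Pv_def)
      then have "proj_pt (Pv t) \<in> L" using 1 proj_in_line by metis
      moreover have "proj_pt (Pv t) \<in> cubic" unfolding cubic_def Pt_def by auto
      ultimately show False using disj by auto
    next
      case 2
      have "proj_pt (1,0,0,0) \<in> L" using 2 proj_in_line[of "(1,0,0,0)"] by simp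
      moreover have "proj_pt (1,0,0,0) \<in> cubic" unfolding cubic_def Pinf_def by auto
      ultimately show False using disj by auto
    qed
  qed
  have nimag: "\<not> imag_chord emb L"
  proof
    assume "imag_chord emb L"
    then obtain t1 where t1: "t1 \<notin> range emb" and LS: "L = {proj_pt x | x. x \<noteq> (0,0,0,0) \<and>
             (\<exists>a b. vmap emb x = vadd (vsmult a (Pv t1)) (vsmult b (Pv (t1 ^ CARD('a)))))}"
      unfolding imag_chord_def by blast
    define t2 where "t2 = t1 ^ CARD('a)"
    have ne: "t1 \<noteq> t2" unfolding t2_def using conj_neq[OF emb_hom t1] by auto
    from Rinf_L LS obtain x a b where x: "proj_pt (1,0,1,0) = proj_pt x"
      "vmap emb x = vadd (vsmult a (Pv t1)) (vsmult b (Pv t2))" unfolding t2_def by blast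
    from proj_eq[OF x(1)] obtain c where c: "c \<noteq> 0" "x = (c,0,c,0)" by auto
    have ec: "emb c \<noteq> 0" using emb_nz[OF emb_hom(2,4) c(1)] .
    from x(2) c emb_hom(1) have eqs: "a + b = 0" "a*t1 + b*t2 = emb c" "a*t1^2 + b*t2^2 = 0"
      "a*t1^3+b*t2^3 = emb c" by (auto simp: Pv_def)
    have "t1^2 = 1" using imag_alg[OF eqs ec ne] .
    then have "(t1 - 1) * (t1 + 1) = 0" by (simp add: algebra_simps power2_eq_square)
    then have "t1 = 1 \<or> t1 = -1" by (auto simp: eq_neg_iff_add_eq_0)
    moreover have "emb (-1) = -1" using emb_hom(3)[of "-1" 1] emb_hom(1,2)
      by (simp add: eq_neg_iff_add_eq_0)
    ultimately have "t1 \<in> range emb" using emb_hom(2) by (metis rangeI)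
    then show False using t1 by simp
  qed
  have Rg_inf: "proj_pt (\<gamma>,\<mu>,\<gamma>,1) \<notin> osc_inf" for \<gamma>
  proof
    assume "proj_pt (\<gamma>,\<mu>,\<gamma>,1) \<in> osc_inf"
    then obtain x0 x1 x2 where e: "proj_pt (\<gamma>,\<mu>,\<gamma>,1) = proj_pt (x0,x1,x2,0)"
      unfolding osc_inf_def by auto
    from proj_eq[OF e] show False by auto
  qed
  have Rinf_osc: "proj_pt (1,0,1,0) \<in> osc t \<longleftrightarrow> 3 * t^2 + 1 = 0" for t :: 'a
    by (rule Rinf_osc_g)
  have Rinf_0: "proj_pt (1,0,1,0) \<notin> osc (0::'a)" using Rinf_osc[of 0] by simp
  have nch: "\<not> chord emb L" unfolding chord_def using nreal ntan nimag by blast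
  have n1: "\<not> L \<subseteq> osc_inf" using Rg_L[of 0] Rg_inf[of 0] by blast
  have n2: "\<not> L \<subseteq> osc 0" using Rinf_L Rinf_0 by blast
  have n3: "(\<forall>t::'a. proj_pt (1, 0, 1, 0) \<notin> osc t) \<longrightarrow>
             (\<forall>t. \<not> L \<subseteq> osc t) \<and> \<not> L \<subseteq> osc_inf" using Rinf_L n1 by blast
  show ?thesis
    apply (intro conjI)
    apply (rule Lset)
    apply (rule disj)
    apply (rule nch)
    apply (rule n1)
    apply (rule n2)
    apply (rule allI, rule Rg_inf)
    using Rinf_osc_g[of 0] apply simp
    apply (rule Rinf_inf_g)
    apply (rule n3)
    apply (rule allI, rule Rinf_osc)
    done
qed

end
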